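(* Let $X$ be a non-degenerate random variable with $E|X|<\infty$ and continuous cumulative distribution function, and suppose that the expectile function $\alpha\mapsto e_X(\alpha)$ is four times continuously differentiable on $(0,1)$. Then $s_2$ is differentiable on $(0,1/2)$ and $$\lim_{\alpha\to 1/2-} s_2'(\alpha) = 0 .$$
   Context: For a random variable $X$ with $E|X|<\infty$ and $\tau\in(0,1)$, the $\tau$-expectile $e_X(\tau)$ is the unique real number $t$ satisfying $\tau\, E(X-t)_+ = (1-\tau)\, E(X-t)_-$, where $x_+=\max\{x,0\}$ and $x_-=\max\{-x,0\}$; $e_X(1/2)=\mu=EX$. For $\alpha\in(0,1/2)$ the normalized expectile skewness is $$s_2(\alpha) = \frac{1}{1-2\alpha}\cdot\frac{e_X(1-\alpha)+e_X(\alpha)-2\mu}{e_X(1-\alpha)-e_X(\alpha)}.$$ *)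

theory Defs
  imports "HOL-Probability.Probability"
begin

definition expectile :: "'a measure \<Rightarrow> ('a \<Rightarrow> real) \<Rightarrow> real \<Rightarrow> real" where
  "expectile M X \<tau> = (THE t. \<tau> * (\<integral>\<omega>. max (X \<omega> - t) 0 \<partial>M)
                          = (1 - \<tau>) * (\<integral>\<omega>. max (- (X \<omega> - t)) 0 \<partial>M))"

definition expectile_skew2 :: "'a measure \<Rightarrow> ('a \<Rightarrow> real) \<Rightarrow> real \<Rightarrow> real" where
  "expectile_skew2 M X \<alpha> =
     (1 / (1 - 2 * \<alpha>)) *
     ((expectile M X (1 - \<alpha>) + expectile M X \<alpha> - 2 * (\<integral>\<omega>. X \<omega> \<partial>M))
      / (expectile M X (1 - \<alpha>) - expectile M X \<alpha>))"

end

theory Submission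
  imports Defs
begin


lemma int_pos_part:
  fixes X :: "'a \<Rightarrow> real"
  assumes "prob_space M" "integrable M X"
  shows "integrable M (\<lambda>\<omega>. max (X \<omega> - t) 0)" "integrable M (\<lambda>\<omega>. max (- (X \<omega> - t)) 0)"
proof -
  interpret prob_space M by fact
  have i1: "integrable M (\<lambda>\<omega>. X \<omega> - t)" using assms(2) by auto
  have i2: "integrable M (\<lambda>\<omega>. - (X \<omega> - t))" using integrable_minus[OF i1] by simp
  show "integrable M (\<lambda>\<omega>. max (X \<omega> - t) 0)"
    using Bochner_Integration.integrable_max[OF i1, of "\<lambda>_. 0"] by simp
  show "integrable M (\<lambda>\<omega>. max (- (X \<omega> - t)) 0)"
    using Bochner_Integration.integrable_max[OF i2, of "\<lambda>_. 0"] by simp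
qed

lemma AB_diff:
  fixes X :: "'a \<Rightarrow> real"
  assumes "prob_space M" "integrable M X"
  shows "(\<integral>\<omega>. max (X \<omega> - t) 0 \<partial>M) - (\<integral>\<omega>. max (- (X \<omega> - t)) 0 \<partial>M) = (\<integral>\<omega>. X \<omega> \<partial>M) - t"
proof -
  interpret prob_space M by fact
  have "(\<integral>\<omega>. max (X \<omega> - t) 0 \<partial>M) - (\<integral>\<omega>. max (- (X \<omega> - t)) 0 \<partial>M)
      = (\<integral>\<omega>. max (X \<omega> - t) 0 - max (- (X \<omega> - t)) 0 \<partial>M)"
    using int_pos_part[OF assms] by simp
  also have "\<dots> = (\<integral>\<omega>. X \<omega> - t \<partial>M)"
    by (rule Bochner_Integration.integral_cong) (auto split: split_max)
  also have "\<dots> = (\<integral>\<omega>. X \<omega> \<partial>M) - t" using assms(2) prob_space by simp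
  finally show ?thesis .
qed

lemma B_mono:
  fixes X :: "'a \<Rightarrow> real"
  assumes "prob_space M" "integrable M X" "s \<le> t"
  shows "(\<integral>\<omega>. max (- (X \<omega> - s)) 0 \<partial>M) \<le> (\<integral>\<omega>. max (- (X \<omega> - t)) 0 \<partial>M)"
    "(\<integral>\<omega>. max (- (X \<omega> - t)) 0 \<partial>M) \<le> (\<integral>\<omega>. max (- (X \<omega> - s)) 0 \<partial>M) + (t - s)"
    "0 \<le> (\<integral>\<omega>. max (- (X \<omega> - t)) 0 \<partial>M)"
proof -
  interpret prob_space M by fact
  show "(\<integral>\<omega>. max (- (X \<omega> - s)) 0 \<partial>M) \<le> (\<integral>\<omega>. max (- (X \<omega> - t)) 0 \<partial>M)"
    apply (rule Bochner_Integration.integral_mono)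
    using int_pos_part[OF assms(1,2)] assms(3) by auto
  have "(\<integral>\<omega>. max (- (X \<omega> - t)) 0 \<partial>M) \<le> (\<integral>\<omega>. max (- (X \<omega> - s)) 0 + (t - s) \<partial>M)"
    apply (rule Bochner_Integration.integral_mono)
    using int_pos_part[OF assms(1,2)] assms(3) by auto
  also have "\<dots> = (\<integral>\<omega>. max (- (X \<omega> - s)) 0 \<partial>M) + (t - s)"
    using int_pos_part[OF assms(1,2)] prob_space by simp
  finally show "(\<integral>\<omega>. max (- (X \<omega> - t)) 0 \<partial>M) \<le> (\<integral>\<omega>. max (- (X \<omega> - s)) 0 \<partial>M) + (t - s)" .
  show "0 \<le> (\<integral>\<omega>. max (- (X \<omega> - t)) 0 \<partial>M)" by (intro Bochner_Integration.integral_nonneg) auto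
qed

definition Bm :: "'a measure \<Rightarrow> ('a \<Rightarrow> real) \<Rightarrow> real \<Rightarrow> real" where
  "Bm M X t = (\<integral>\<omega>. max (- (X \<omega> - t)) 0 \<partial>M)"

lemma Bm_cont:
  fixes X :: "'a \<Rightarrow> real"
  assumes "prob_space M" "integrable M X"
  shows "continuous_on UNIV (Bm M X)"
proof (rule lipschitz_on_continuous_on[of 1])
  show "1-lipschitz_on UNIV (Bm M X)"
  proof (rule lipschitz_onI)
    fix x y :: real
    show "dist (Bm M X x) (Bm M X y) \<le> 1 * dist x y"
    proof (cases "x \<le> y")
      case True
      then show ?thesis using B_mono[OF assms True] by (simp add: Bm_def dist_real_def)
    next
      case False
      then have yx: "y \<le> x" by simp
      then show ?thesis using B_mono[OF assms yx] by (simp add: Bm_def dist_real_def)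
    qed
  qed simp
qed

lemma expectile_props:
  fixes X :: "'a \<Rightarrow> real"
  assumes P: "prob_space M" "integrable M X" and tau: "0 < \<tau>" "\<tau> < 1"
  shows "\<tau> * (expectile M X \<tau> - (\<integral>\<omega>. X \<omega> \<partial>M)) = (2 * \<tau> - 1) * Bm M X (expectile M X \<tau>)"
proof -
  define mu where "mu = (\<integral>\<omega>. X \<omega> \<partial>M)"
  define eq where "eq = (\<lambda>t. \<tau> * (\<integral>\<omega>. max (X \<omega> - t) 0 \<partial>M)
                          = (1 - \<tau>) * (\<integral>\<omega>. max (- (X \<omega> - t)) 0 \<partial>M))"
  define phi where "phi = (\<lambda>t. (2 * \<tau> - 1) * Bm M X t + \<tau> * (mu - t))"
  have A: "(\<integral>\<omega>. max (X \<omega> - t) 0 \<partial>M) = Bm M X t + mu - t" for t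
    using AB_diff[OF P, of t] by (simp add: Bm_def mu_def)
  have eq_iff: "eq t \<longleftrightarrow> phi t = 0" for t
    unfolding eq_def phi_def A by (simp add: Bm_def algebra_simps)
  have Bmono: "s \<le> t \<Longrightarrow> Bm M X s \<le> Bm M X t \<and> Bm M X t \<le> Bm M X s + (t - s) \<and> 0 \<le> Bm M X t" for s t
    using B_mono[OF P] by (simp add: Bm_def)
  have Bnn: "0 \<le> Bm M X t" for t using Bmono[of t t] by simp
  have strict: "phi t < phi s" if "s < t" for s t
  proof -
    have b: "Bm M X s \<le> Bm M X t" "Bm M X t \<le> Bm M X s + (t - s)" using Bmono[of s t] that by auto
    have pd: "phi t - phi s = (2 * \<tau> - 1) * (Bm M X t - Bm M X s) - \<tau> * (t - s)"
      by (simp add: phi_def algebra_simps)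
    show ?thesis
    proof (cases "2 * \<tau> - 1 \<ge> 0")
      case True
      have "(2 * \<tau> - 1) * (Bm M X t - Bm M X s) \<le> (2 * \<tau> - 1) * (t - s)"
        using b True by (intro mult_left_mono) auto
      moreover have "(\<tau> - 1) * (t - s) < 0" using tau that by (intro mult_neg_pos) auto
      ultimately show ?thesis using that tau unfolding phi_def by (simp add: algebra_simps)
    next
      case False
      have "(2 * \<tau> - 1) * (Bm M X t - Bm M X s) \<le> 0"
        using b False by (intro mult_nonpos_nonneg) auto
      moreover have "\<tau> * (t - s) > 0" using tau that by simp
      ultimately show ?thesis using pd by linarith
    qed
  qed
  have contphi: "continuous_on UNIV phi"
    unfolding phi_def by (intro continuous_intros continuous_on_compose2[OF Bm_cont[OF P]]) auto
  define K where "K = Bm M X mu / (\<tau> * (1 - \<tau>)) + 1"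
  have Kpos: "K > 0"
  proof -
    have "Bm M X mu / (\<tau> * (1 - \<tau>)) \<ge> 0" using Bnn[of mu] tau by (intro divide_nonneg_pos) auto
    then show ?thesis unfolding K_def by linarith
  qed
  have lo: "phi (mu - K) \<ge> 0"
  proof -
    have b: "Bm M X (mu - K) \<le> Bm M X mu" using Bmono[of "mu - K" mu] Kpos by auto
    have "Bm M X mu \<le> \<tau> * K"
    proof -
      have "Bm M X mu / (\<tau> * (1 - \<tau>)) \<ge> Bm M X mu / \<tau>"
        using tau Bnn[of mu] by (intro divide_left_mono) (auto simp: mult_le_cancel_left1)
      then have "Bm M X mu / \<tau> \<le> K" unfolding K_def by simp
      then show ?thesis using tau by (simp add: field_simps)
    qed
    moreover have "(2 * \<tau> - 1) * Bm M X (mu - K) \<ge> -1 * Bm M X (mu - K)"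
      using tau Bnn[of "mu - K"] by (intro mult_right_mono) auto
    ultimately show ?thesis unfolding phi_def using b by simp
  qed
  have hi: "phi (mu + K) \<le> 0"
  proof -
    have b: "Bm M X (mu + K) \<le> Bm M X mu + K" using Bmono[of mu "mu + K"] Kpos by auto
    have "Bm M X mu \<le> (1 - \<tau>) * K"
    proof -
      have "Bm M X mu / (\<tau> * (1 - \<tau>)) \<ge> Bm M X mu / (1 - \<tau>)"
        using tau Bnn[of mu] by (intro divide_left_mono) (auto simp: mult_le_cancel_right1)
      then have "Bm M X mu / (1 - \<tau>) \<le> K" unfolding K_def by simp
      then show ?thesis using tau by (simp add: field_simps)
    qed
    show ?thesis
    proof (cases "2 * \<tau> - 1 \<ge> 0")
      case True
      have "(2 * \<tau> - 1) * Bm M X (mu + K) \<le> (2 * \<tau> - 1) * (Bm M X mu + K)"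
        using True b by (intro mult_left_mono) auto
      moreover have "(2 * \<tau> - 1) * Bm M X mu \<le> 1 * Bm M X mu"
        using tau Bnn[of mu] by (intro mult_right_mono) auto
      ultimately show ?thesis unfolding phi_def using \<open>Bm M X mu \<le> (1 - \<tau>) * K\<close>
        by (simp add: algebra_simps)
    next
      case False
      have "(2 * \<tau> - 1) * Bm M X (mu + K) \<le> 0"
        using False Bnn[of "mu + K"] by (intro mult_nonpos_nonneg) auto
      moreover have "\<tau> * K > 0" using tau Kpos by simp
      ultimately show ?thesis unfolding phi_def by simp
    qed
  qed
  obtain t where t: "phi t = 0"
    using IVT2'[of phi "mu + K" 0 "mu - K"] lo hi Kpos continuous_on_subset[OF contphi] by force
  have ex1: "\<exists>!t. eq t"
  proof (rule ex1I[of _ t])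
    show "eq t" using t eq_iff by simp
    fix s assume "eq s"
    then have "phi s = 0" using eq_iff by simp
    then show "s = t" using strict[of s t] strict[of t s] t by (cases s t rule: linorder_cases) auto
  qed
  have "eq (expectile M X \<tau>)"
    unfolding expectile_def using theI'[OF ex1] unfolding eq_def .
  then have "phi (expectile M X \<tau>) = 0" using eq_iff by simp
  then show ?thesis unfolding phi_def mu_def by (simp add: algebra_simps)
qed

lemma expectile_half:
  fixes X :: "'a \<Rightarrow> real"
  assumes P: "prob_space M" "integrable M X"
  shows "expectile M X (1/2) = (\<integral>\<omega>. X \<omega> \<partial>M)"
  using expectile_props[OF P, of "1/2"] by simp

lemma Bm_mu_pos:
  fixes X :: "'a \<Rightarrow> real"
  assumes P: "prob_space M" "integrable M X"
    and nondeg: "\<not> (\<exists>c. AE \<omega> in M. X \<omega> = c)"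
  shows "Bm M X (\<integral>\<omega>. X \<omega> \<partial>M) > 0"
proof (rule ccontr)
  interpret prob_space M by fact
  define mu where "mu = (\<integral>\<omega>. X \<omega> \<partial>M)"
  assume "\<not> Bm M X (\<integral>\<omega>. X \<omega> \<partial>M) > 0"
  moreover have "Bm M X mu \<ge> 0" using B_mono[OF P, of mu mu] by (simp add: Bm_def)
  ultimately have B0: "Bm M X mu = 0" unfolding mu_def by simp
  have A0: "(\<integral>\<omega>. max (X \<omega> - mu) 0 \<partial>M) = 0"
    using AB_diff[OF P, of mu] B0 by (simp add: Bm_def mu_def)
  have "(\<integral>\<omega>. max (X \<omega> - mu) 0 + max (- (X \<omega> - mu)) 0 \<partial>M) = 0"
    using int_pos_part[OF P, of mu] A0 B0 by (simp add: Bm_def)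
  moreover have "integrable M (\<lambda>\<omega>. max (X \<omega> - mu) 0 + max (- (X \<omega> - mu)) 0)"
    using int_pos_part[OF P, of mu] by simp
  ultimately have "AE \<omega> in M. max (X \<omega> - mu) 0 + max (- (X \<omega> - mu)) 0 = 0"
    by (subst (asm) integral_nonneg_eq_0_iff_AE) auto
  then have "AE \<omega> in M. X \<omega> = mu"
    by eventually_elim (auto split: split_max)
  then show False using nondeg by blast
qed

lemma expectile_below:
  fixes X :: "'a \<Rightarrow> real"
  assumes P: "prob_space M" "integrable M X"
    and nondeg: "\<not> (\<exists>c. AE \<omega> in M. X \<omega> = c)"
    and a: "0 < a" "a < 1/2"
  shows "expectile M X a < (\<integral>\<omega>. X \<omega> \<partial>M)"
proof -
  define mu where "mu = (\<integral>\<omega>. X \<omega> \<partial>M)"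
  have e: "a * (expectile M X a - mu) = (2 * a - 1) * Bm M X (expectile M X a)"
    using expectile_props[OF P, of a] a unfolding mu_def by simp
  have Bn: "Bm M X (expectile M X a) \<ge> 0" using B_mono[OF P, of "expectile M X a" "expectile M X a"] by (simp add: Bm_def)
  have "(2 * a - 1) * Bm M X (expectile M X a) \<le> 0" using a Bn by (intro mult_nonpos_nonneg) auto
  then have "a * (expectile M X a - mu) \<le> 0" using e by simp
  then have "expectile M X a - mu \<le> 0" using a by (simp add: mult_le_0_iff)
  then have le: "expectile M X a \<le> mu" by simp
  moreover have "expectile M X a \<noteq> mu"
  proof
    assume "expectile M X a = mu"
    then have "(2 * a - 1) * Bm M X mu = 0" using e by simp
    then have "Bm M X mu = 0" using a by simp
    then show False using Bm_mu_pos[OF P nondeg] unfolding mu_def by simp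
  qed
  ultimately show ?thesis unfolding mu_def by simp
qed

lemma expectile_above:
  fixes X :: "'a \<Rightarrow> real"
  assumes P: "prob_space M" "integrable M X"
    and a: "1/2 \<le> a" "a < 1"
  shows "expectile M X a \<ge> (\<integral>\<omega>. X \<omega> \<partial>M)"
proof -
  define mu where "mu = (\<integral>\<omega>. X \<omega> \<partial>M)"
  have e: "a * (expectile M X a - mu) = (2 * a - 1) * Bm M X (expectile M X a)"
    using expectile_props[OF P, of a] a unfolding mu_def by simp
  have Bn: "Bm M X (expectile M X a) \<ge> 0" using B_mono[OF P, of "expectile M X a" "expectile M X a"] by (simp add: Bm_def)
  have "(2 * a - 1) * Bm M X (expectile M X a) \<ge> 0" using a Bn by (intro mult_nonneg_nonneg) auto
  then have "a * (expectile M X a - mu) \<ge> 0" using e by simp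
  then have "expectile M X a - mu \<ge> 0" using a by (simp add: zero_le_mult_iff)
  then show ?thesis unfolding mu_def by simp
qed

lemma expectile_deriv_half:
  fixes X :: "'a \<Rightarrow> real"
  assumes P: "prob_space M" "integrable M X"
    and d: "expectile M X differentiable (at (1/2))"
  shows "deriv (expectile M X) (1/2) = 4 * Bm M X (\<integral>\<omega>. X \<omega> \<partial>M)"
proof -
  define e where "e = expectile M X"
  define mu where "mu = (\<integral>\<omega>. X \<omega> \<partial>M)"
  have e0: "e (1/2) = mu" unfolding e_def mu_def by (rule expectile_half[OF P])
  have "(e has_real_derivative deriv e (1/2)) (at (1/2))"
    using d unfolding e_def by (simp add: DERIV_deriv_iff_real_differentiable)
  then have L1: "((\<lambda>y. (e y - e (1/2)) / (y - 1/2)) \<longlongrightarrow> deriv e (1/2)) (at (1/2))"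
    by (simp add: has_field_derivative_iff)
  have ce: "isCont e (1/2)" using d unfolding e_def by (simp add: differentiable_imp_continuous_within)
  have cB: "isCont (Bm M X) mu" using Bm_cont[OF P] by (simp add: continuous_on_eq_continuous_at)
  have "((\<lambda>y. 2 * Bm M X (e y) / y) \<longlongrightarrow> 2 * Bm M X (e (1/2)) / (1/2)) (at (1/2))"
    using isCont_o2[OF ce] cB e0
    by (intro tendsto_intros isCont_tendsto_compose[OF _ ce[unfolded isCont_def]]) (auto simp: e0)
  then have L2: "((\<lambda>y. 2 * Bm M X (e y) / y) \<longlongrightarrow> 4 * Bm M X mu) (at (1/2))" using e0 by simp
  have ev: "eventually (\<lambda>y. y \<in> {0<..<1} - {1/2}) (at (1/2::real))"
    by (rule eventually_at_in_open) auto
  have L3: "((\<lambda>y. (e y - e (1/2)) / (y - 1/2)) \<longlongrightarrow> 4 * Bm M X mu) (at (1/2))"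
  proof (rule Lim_transform_eventually[OF L2])
    show "\<forall>\<^sub>F y in at (1/2). 2 * Bm M X (e y) / y = (e y - e (1/2)) / (y - 1/2)"
      using ev
    proof eventually_elim
      case (elim y)
      then have "y * (e y - mu) = (2 * y - 1) * Bm M X (e y)"
        using expectile_props[OF P, of y] unfolding e_def mu_def by auto
      then show ?case using elim e0 by (auto simp: field_simps)
    qed
  qed
  show ?thesis using tendsto_unique[OF _ L1 L3] unfolding e_def mu_def by simp
qed



lemma alg_bound:
  fixes h e1 e2 N D N1 D1 A B C F :: real
  assumes h: "0 < h" "h \<le> 1" and e1: "e1 > 0"
    and bN: "\<bar>N - e2 * h^2\<bar> \<le> A * h^4" and bD: "\<bar>D - 2 * e1 * h\<bar> \<le> B * h^3"
    and bN1: "\<bar>N1 + 2 * e2 * h\<bar> \<le> C * h^3" and bD1: "\<bar>D1 + 2 * e1\<bar> \<le> F * h^2"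
    and small: "B * h^2 \<le> e1"
  shows "\<bar>2 / (2*h)^2 * (N / D) + 1 / (2*h) * ((N1 * D - N * D1) / D^2)\<bar>
         \<le> (\<bar>e2\<bar> * (3 * B + F) + A * (4 * e1 + B + F) + C * (2 * e1 + B)) / (2 * e1^2) * h"
proof -
  define a where "a = (N - e2 * h^2) / h^2"
  define b where "b = (D - 2 * e1 * h) / h"
  define c where "c = (N1 + 2 * e2 * h) / h"
  define f where "f = D1 + 2 * e1"
  have hN: "N = h^2 * (e2 + a)" unfolding a_def using h by (simp add: field_simps)
  have hD: "D = h * (2 * e1 + b)" unfolding b_def using h by (simp add: field_simps)
  have hN1: "N1 = h * (-2 * e2 + c)" unfolding c_def using h by (simp add: field_simps)
  have hD1: "D1 = -2 * e1 + f" unfolding f_def by simp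
  have h2: "h^2 > 0" "h^3 > 0" "h^4 > 0" using h by auto
  have ba: "\<bar>a\<bar> \<le> A * h^2"
  proof -
    have "\<bar>a\<bar> = \<bar>N - e2 * h^2\<bar> / h^2" unfolding a_def by (simp add: abs_divide)
    also have "\<dots> \<le> A * h^4 / h^2" using bN h2 by (intro divide_right_mono) auto
    also have "\<dots> = A * h^2" using h by (simp add: power_def field_simps)
    finally show ?thesis .
  qed
  have bb: "\<bar>b\<bar> \<le> B * h^2"
  proof -
    have "\<bar>b\<bar> = \<bar>D - 2 * e1 * h\<bar> / h" unfolding b_def using h by (simp add: abs_divide)
    also have "\<dots> \<le> B * h^3 / h" using bD h by (intro divide_right_mono) auto
    also have "\<dots> = B * h^2" using h by (simp add: power_def field_simps)
    finally show ?thesis .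
  qed
  have bc: "\<bar>c\<bar> \<le> C * h^2"
  proof -
    have "\<bar>c\<bar> = \<bar>N1 + 2 * e2 * h\<bar> / h" unfolding c_def using h by (simp add: abs_divide)
    also have "\<dots> \<le> C * h^3 / h" using bN1 h by (intro divide_right_mono) auto
    also have "\<dots> = C * h^2" using h by (simp add: power_def field_simps)
    finally show ?thesis .
  qed
  have bf: "\<bar>f\<bar> \<le> F * h^2" using bD1 unfolding f_def .
  have hle: "h^2 \<le> 1" using h by (simp add: power_le_one)
  have nn: "0 \<le> X * h^2 \<Longrightarrow> X \<ge> 0" for X using h2 by (simp add: zero_le_mult_iff)
  have Bn: "B \<ge> 0" apply (rule nn) using bb abs_ge_zero[of b] by linarith
  have Fn: "F \<ge> 0" apply (rule nn) using bf abs_ge_zero[of f] by linarith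
  have An: "A \<ge> 0" apply (rule nn) using ba abs_ge_zero[of a] by linarith
  have Cn: "C \<ge> 0" apply (rule nn) using bc abs_ge_zero[of c] by linarith
  have b1: "\<bar>b\<bar> \<le> B" using bb mult_left_le[OF hle Bn] by linarith
  have f1: "\<bar>f\<bar> \<le> F" using bf mult_left_le[OF hle Fn] by linarith
  have dpos: "2 * e1 + b \<ge> e1" using bb small by linarith
  define d where "d = 2 * e1 + b"
  have dp: "d > 0" "d \<ge> e1" using dpos e1 unfolding d_def by auto
  have expr: "2 / (2*h)^2 * (N / D) + 1 / (2*h) * ((N1 * D - N * D1) / D^2)
      = (- e2 * b - e2 * f + a * (4 * e1 + b - f) + c * (2 * e1 + b)) / (2 * h * d^2)"
  proof -
    have D: "D = h * d" unfolding hD d_def ..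
    have q1: "N / D = h * (e2 + a) / d" unfolding hN D using h dp by (simp add: power2_eq_square)
    have q2: "(N1 * D - N * D1) / D^2 = ((-2 * e2 + c) * d - (e2 + a) * D1) / d^2"
      unfolding hN D hN1 using h dp by (simp add: power2_eq_square field_simps)
    have "2 / (2*h)^2 * (N / D) + 1 / (2*h) * ((N1 * D - N * D1) / D^2)
        = ((e2 + a) * d + ((-2 * e2 + c) * d - (e2 + a) * D1)) / (2 * h * d^2)"
      unfolding q1 q2 using h dp by (simp add: power2_eq_square field_simps)
    also have "(e2 + a) * d + ((-2 * e2 + c) * d - (e2 + a) * D1)
       = - e2 * b - e2 * f + a * (4 * e1 + b - f) + c * (2 * e1 + b)"
      unfolding d_def hD1 by (simp add: algebra_simps)
    finally show ?thesis .
  qed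
  have num: "\<bar>- e2 * b - e2 * f + a * (4 * e1 + b - f) + c * (2 * e1 + b)\<bar>
      \<le> (\<bar>e2\<bar> * (3 * B + F) + A * (4 * e1 + B + F) + C * (2 * e1 + B)) * h^2"
  proof -
    have t1: "\<bar>e2 * b\<bar> \<le> \<bar>e2\<bar> * (B * h^2)" using bb by (simp add: abs_mult mult_left_mono)
    have t2: "\<bar>e2 * f\<bar> \<le> \<bar>e2\<bar> * (F * h^2)" using bf by (simp add: abs_mult mult_left_mono)
    have t3: "\<bar>a * (4 * e1 + b - f)\<bar> \<le> (A * h^2) * (4 * e1 + B + F)"
      unfolding abs_mult using ba b1 f1 e1 An h2
      by (intro mult_mono) (auto simp: abs_le_iff)
    have t4: "\<bar>c * (2 * e1 + b)\<bar> \<le> (C * h^2) * (2 * e1 + B)"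
      unfolding abs_mult using bc b1 e1 Cn h2
      by (intro mult_mono) (auto simp: abs_le_iff)
    have "\<bar>- e2 * b - e2 * f + a * (4 * e1 + b - f) + c * (2 * e1 + b)\<bar>
        \<le> \<bar>e2 * b\<bar> + \<bar>e2 * f\<bar> + \<bar>a * (4 * e1 + b - f)\<bar> + \<bar>c * (2 * e1 + b)\<bar>" by linarith
    also have "\<dots> \<le> \<bar>e2\<bar> * (B * h^2) + \<bar>e2\<bar> * (F * h^2) + (A * h^2) * (4 * e1 + B + F) + (C * h^2) * (2 * e1 + B)"
      using t1 t2 t3 t4 by linarith
    also have "\<dots> \<le> (\<bar>e2\<bar> * (3 * B + F) + A * (4 * e1 + B + F) + C * (2 * e1 + B)) * h^2"
      using Bn h2 by (simp add: algebra_simps mult_nonneg_nonneg)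
    finally show ?thesis .
  qed
  have den: "2 * h * d^2 \<ge> 2 * h * e1^2" using dp e1 h by (intro mult_left_mono power_mono) auto
  define Q where "Q = \<bar>e2\<bar> * (3 * B + F) + A * (4 * e1 + B + F) + C * (2 * e1 + B)"
  have Qn: "Q \<ge> 0" unfolding Q_def using Bn Fn An Cn e1 by (intro add_nonneg_nonneg mult_nonneg_nonneg) auto
  have "\<bar>2 / (2*h)^2 * (N / D) + 1 / (2*h) * ((N1 * D - N * D1) / D^2)\<bar>
      = \<bar>- e2 * b - e2 * f + a * (4 * e1 + b - f) + c * (2 * e1 + b)\<bar> / (2 * h * d^2)"
    unfolding expr using h dp by (simp add: abs_divide)
  also have "\<dots> \<le> Q * h^2 / (2 * h * e1^2)"
    using num den h e1 Qn unfolding Q_def[symmetric]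
    by (intro frac_le) auto
  also have "\<dots> = Q / (2 * e1^2) * h" using h e1 by (simp add: field_simps power2_eq_square)
  finally show ?thesis unfolding Q_def .
qed

lemma taylor_est:
  fixes f :: "nat \<Rightarrow> real \<Rightarrow> real"
  assumes n: "0 < n"
    and D: "\<And>m t. m < n \<Longrightarrow> 1/4 \<le> t \<Longrightarrow> t \<le> 3/4 \<Longrightarrow> (f m has_real_derivative f (Suc m) t) (at t)"
    and K: "\<And>t. 1/4 \<le> t \<Longrightarrow> t \<le> 3/4 \<Longrightarrow> \<bar>f n t\<bar> \<le> K"
    and x: "1/4 \<le> x" "x \<le> 3/4"
  shows "\<bar>f 0 x - (\<Sum>m<n. f m (1/2) / fact m * (x - 1/2)^m)\<bar> \<le> K / fact n * \<bar>x - 1/2\<bar>^n"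
proof (cases "x = 1/2")
  case True
  obtain k where k: "n = Suc k" using n gr0_implies_Suc by blast
  have sumeq: "(\<Sum>m<n. f m (1/2) / fact m * (1/2 - 1/2 :: real)^m) = f 0 (1/2)"
    unfolding k by (simp add: sum.lessThan_Suc_shift del: sum.lessThan_Suc)
  have K0: "K \<ge> 0" using K[of "1/2"] by linarith
  show ?thesis unfolding True sumeq using K0 by simp
next
  case False
  obtain t where t: "(if x < 1/2 then x < t \<and> t < 1/2 else 1/2 < t \<and> t < x)"
    and eq: "f 0 x = (\<Sum>m<n. (f m (1/2) / fact m) * (x - 1/2)^m) + (f n t / fact n) * (x - 1/2)^n"
    using Taylor[of n f "f 0" "1/4" "3/4" "1/2" x] n D x False by force
  have tI: "1/4 \<le> t" "t \<le> 3/4" using t x by (auto split: if_splits)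
  have "\<bar>f 0 x - (\<Sum>m<n. f m (1/2) / fact m * (x - 1/2)^m)\<bar> = \<bar>f n t\<bar> / fact n * \<bar>x - 1/2\<bar>^n"
    using eq by (simp add: abs_mult power_abs)
  also have "\<dots> \<le> K / fact n * \<bar>x - 1/2\<bar>^n"
    using K[OF tI] by (intro mult_right_mono divide_right_mono) auto
  finally show ?thesis .
qed

lemma taylor4:
  fixes f :: "nat \<Rightarrow> real \<Rightarrow> real"
  assumes D: "\<And>m t. m < 4 \<Longrightarrow> 1/4 \<le> t \<Longrightarrow> t \<le> 3/4 \<Longrightarrow> (f m has_real_derivative f (Suc m) t) (at t)"
    and K: "\<And>t. 1/4 \<le> t \<Longrightarrow> t \<le> 3/4 \<Longrightarrow> \<bar>f 4 t\<bar> \<le> K"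
    and x: "1/4 \<le> x" "x \<le> 3/4"
  shows "\<bar>f 0 x - (f 0 (1/2) + f 1 (1/2) * (x - 1/2) + f 2 (1/2) / 2 * (x - 1/2)^2
           + f 3 (1/2) / 6 * (x - 1/2)^3)\<bar> \<le> K / 24 * \<bar>x - 1/2\<bar>^4"
  using taylor_est[of 4 f K x] D K x by (simp add: eval_nat_numeral)

lemma taylor3:
  fixes f :: "nat \<Rightarrow> real \<Rightarrow> real"
  assumes D: "\<And>m t. m < 3 \<Longrightarrow> 1/4 \<le> t \<Longrightarrow> t \<le> 3/4 \<Longrightarrow> (f m has_real_derivative f (Suc m) t) (at t)"
    and K: "\<And>t. 1/4 \<le> t \<Longrightarrow> t \<le> 3/4 \<Longrightarrow> \<bar>f 3 t\<bar> \<le> K"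
    and x: "1/4 \<le> x" "x \<le> 3/4"
  shows "\<bar>f 0 x - (f 0 (1/2) + f 1 (1/2) * (x - 1/2) + f 2 (1/2) / 2 * (x - 1/2)^2)\<bar>
           \<le> K / 6 * \<bar>x - 1/2\<bar>^3"
  using taylor_est[of 3 f K x] D K x by (simp add: eval_nat_numeral)

lemma taylor2:
  fixes f :: "nat \<Rightarrow> real \<Rightarrow> real"
  assumes D: "\<And>m t. m < 2 \<Longrightarrow> 1/4 \<le> t \<Longrightarrow> t \<le> 3/4 \<Longrightarrow> (f m has_real_derivative f (Suc m) t) (at t)"
    and K: "\<And>t. 1/4 \<le> t \<Longrightarrow> t \<le> 3/4 \<Longrightarrow> \<bar>f 2 t\<bar> \<le> K"
    and x: "1/4 \<le> x" "x \<le> 3/4"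
  shows "\<bar>f 0 x - (f 0 (1/2) + f 1 (1/2) * (x - 1/2))\<bar> \<le> K / 2 * \<bar>x - 1/2\<bar>^2"
  using taylor_est[of 2 f K x] D K x by (simp add: eval_nat_numeral)

lemma main_analytic:
  fixes e :: "real \<Rightarrow> real" and mu :: real
  assumes diff: "\<forall>k<4. \<forall>a\<in>{0<..<1}. ((deriv ^^ k) e) differentiable (at a)"
    and cont4: "continuous_on {0<..<1} ((deriv ^^ 4) e)"
    and half: "e (1/2) = mu"
    and e1pos: "deriv e (1/2) > 0"
    and mono: "\<And>a. 0 < a \<Longrightarrow> a < 1/2 \<Longrightarrow> e a < e (1 - a)"
    and S_def: "S = (\<lambda>\<alpha>. (1 / (1 - 2 * \<alpha>)) * ((e (1 - \<alpha>) + e \<alpha> - 2 * mu) / (e (1 - \<alpha>) - e \<alpha>)))"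
  shows "(\<forall>a\<in>{0<..<1/2}. S differentiable (at a)) \<and> (deriv S \<longlongrightarrow> 0) (at_left (1/2))"
proof -
  have DE: "((deriv ^^ m) e has_real_derivative (deriv ^^ Suc m) e t) (at t)"
    if "m < 4" "0 < t" "t < 1" for m t
    using diff that by (simp add: DERIV_deriv_iff_real_differentiable)
  define Sd where "Sd = (\<lambda>\<alpha>. 2 / (1 - 2 * \<alpha>)^2 * ((e (1 - \<alpha>) + e \<alpha> - 2 * mu) / (e (1 - \<alpha>) - e \<alpha>))
     + 1 / (1 - 2 * \<alpha>) * (((deriv e \<alpha> - deriv e (1 - \<alpha>)) * (e (1 - \<alpha>) - e \<alpha>)
          - (e (1 - \<alpha>) + e \<alpha> - 2 * mu) * (- deriv e (1 - \<alpha>) - deriv e \<alpha>)) / (e (1 - \<alpha>) - e \<alpha>)^2))"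
  have Sder: "(S has_real_derivative Sd \<alpha>) (at \<alpha>)" if a: "0 < \<alpha>" "\<alpha> < 1/2" for \<alpha>
  proof -
    have ea: "(e has_real_derivative deriv e \<alpha>) (at \<alpha>)" using DE[of 0 \<alpha>] a by simp
    have eb: "(e has_real_derivative deriv e (1 - \<alpha>)) (at (1 - \<alpha>))" using DE[of 0 "1 - \<alpha>"] a by simp
    have lin: "((\<lambda>x. 1 - x) has_real_derivative -1) (at \<alpha>)"
      by (auto intro!: derivative_eq_intros)
    have g: "((\<lambda>x. e (1 - x)) has_real_derivative deriv e (1 - \<alpha>) * -1) (at \<alpha>)"
      using DERIV_chain2[OF eb lin] by simp
    have dN: "((\<lambda>x. e (1 - x) + e x - 2 * mu) has_real_derivative deriv e (1 - \<alpha>) * -1 + deriv e \<alpha> - 0) (at \<alpha>)"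
      by (intro DERIV_diff DERIV_add g ea DERIV_const)
    have dD: "((\<lambda>x. e (1 - x) - e x) has_real_derivative deriv e (1 - \<alpha>) * -1 - deriv e \<alpha>) (at \<alpha>)"
      by (intro DERIV_diff g ea)
    have Dne: "e (1 - \<alpha>) - e \<alpha> \<noteq> 0" using mono[OF a] by simp
    have dQ: "((\<lambda>x. (e (1 - x) + e x - 2 * mu) / (e (1 - x) - e x)) has_real_derivative
       ((deriv e (1 - \<alpha>) * -1 + deriv e \<alpha> - 0) * (e (1 - \<alpha>) - e \<alpha>) - (e (1 - \<alpha>) + e \<alpha> - 2 * mu) * (deriv e (1 - \<alpha>) * -1 - deriv e \<alpha>))
         / ((e (1 - \<alpha>) - e \<alpha>) * (e (1 - \<alpha>) - e \<alpha>))) (at \<alpha>)"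
      by (rule DERIV_divide[OF dN dD Dne])
    have dP: "((\<lambda>x. 1 / (1 - 2 * x)) has_real_derivative 2 / (1 - 2 * \<alpha>)^2) (at \<alpha>)"
      using a by (auto intro!: derivative_eq_intros simp: power2_eq_square field_simps)
    have "(S has_real_derivative 2 / (1 - 2 * \<alpha>)^2 * ((e (1 - \<alpha>) + e \<alpha> - 2 * mu) / (e (1 - \<alpha>) - e \<alpha>))
         + ((deriv e (1 - \<alpha>) * -1 + deriv e \<alpha> - 0) * (e (1 - \<alpha>) - e \<alpha>) - (e (1 - \<alpha>) + e \<alpha> - 2 * mu) * (deriv e (1 - \<alpha>) * -1 - deriv e \<alpha>))
         / ((e (1 - \<alpha>) - e \<alpha>) * (e (1 - \<alpha>) - e \<alpha>)) * (1 / (1 - 2 * \<alpha>))) (at \<alpha>)"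
      unfolding S_def by (rule DERIV_mult[OF dP dQ])
    then show ?thesis unfolding Sd_def by (simp add: power2_eq_square algebra_simps)
  qed
  have part1: "\<forall>a\<in>{0<..<1/2}. S differentiable (at a)"
  proof
    fix a :: real assume "a \<in> {0<..<1/2}"
    then have "(S has_real_derivative Sd a) (at a)" by (intro Sder) auto
    then show "S differentiable (at a)" by (auto simp: real_differentiable_def)
  qed
  have c3: "continuous_on {1/4..3/4} ((deriv ^^ 3) e)"
    using diff by (intro continuous_at_imp_continuous_on ballI differentiable_imp_continuous_within) auto
  have c4: "continuous_on {1/4..3/4} ((deriv ^^ 4) e)"
    by (rule continuous_on_subset[OF cont4]) auto
  obtain K3 where K3: "K3 \<ge> 0" "\<And>x. x \<in> {1/4..3/4} \<Longrightarrow> norm ((deriv ^^ 3) e x) \<le> K3"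
    using continuous_on_compact_bound[OF compact_Icc c3] by blast
  obtain K4 where K4: "K4 \<ge> 0" "\<And>x. x \<in> {1/4..3/4} \<Longrightarrow> norm ((deriv ^^ 4) e x) \<le> K4"
    using continuous_on_compact_bound[OF compact_Icc c4] by blast
  define e1 where "e1 = deriv e (1/2)"
  define e2 where "e2 = (deriv ^^ 2) e (1/2)"
  define A where "A = K4 / 12"
  define B where "B = K3 / 3"
  define C where "C = K4 / 3"
  define F where "F = K3"
  define Q where "Q = (\<bar>e2\<bar> * (3 * B + F) + A * (4 * e1 + B + F) + C * (2 * e1 + B)) / (2 * e1^2)"
  define \<delta> where "\<delta> = min (1/4) (e1 / (B + 1))"
  have e1p: "e1 > 0" using e1pos unfolding e1_def .
  have Bn: "B \<ge> 0" unfolding B_def using K3 by simp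
  have dpos: "\<delta> > 0" unfolding \<delta>_def using e1p Bn by auto
  have Dq: "((\<lambda>m. (deriv ^^ m) e) m has_real_derivative (\<lambda>m. (deriv ^^ m) e) (Suc m) t) (at t)"
    if "m < 4" "1/4 \<le> t" "t \<le> 3/4" for m t using DE[of m t] that by simp
  have Dq': "((\<lambda>m. (deriv ^^ Suc m) e) m has_real_derivative (\<lambda>m. (deriv ^^ Suc m) e) (Suc m) t) (at t)"
    if "m < 3" "1/4 \<le> t" "t \<le> 3/4" for m t using DE[of "Suc m" t] that by simp
  have bound: "\<bar>Sd (1/2 - h)\<bar> \<le> Q * h" if h: "0 < h" "h < \<delta>" for h
  proof -
    have h4: "h \<le> 1/4" using h unfolding \<delta>_def by simp
    have xp: "1/4 \<le> 1/2 + h" "1/2 + h \<le> 3/4" and xm: "1/4 \<le> 1/2 - h" "1/2 - h \<le> 3/4"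
      using h h4 by auto
    have K3': "\<bar>(deriv ^^ 3) e t\<bar> \<le> K3" if "1/4 \<le> t" "t \<le> 3/4" for t using K3(2)[of t] that by simp
    have K4': "\<bar>(deriv ^^ 4) e t\<bar> \<le> K4" if "1/4 \<le> t" "t \<le> 3/4" for t using K4(2)[of t] that by simp
    note T4p = taylor4[of "\<lambda>m. (deriv ^^ m) e" K4 "1/2 + h", OF Dq K4' xp]
    note T4m = taylor4[of "\<lambda>m. (deriv ^^ m) e" K4 "1/2 - h", OF Dq K4' xm]
    note T3p = taylor3[of "\<lambda>m. (deriv ^^ m) e" K3 "1/2 + h", OF Dq K3' xp]
    note T3m = taylor3[of "\<lambda>m. (deriv ^^ m) e" K3 "1/2 - h", OF Dq K3' xm]
    note S3p = taylor3[of "\<lambda>m. (deriv ^^ Suc m) e" K4 "1/2 + h", OF Dq' _ xp]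
    note S3m = taylor3[of "\<lambda>m. (deriv ^^ Suc m) e" K4 "1/2 - h", OF Dq' _ xm]
    note S2p = taylor2[of "\<lambda>m. (deriv ^^ Suc m) e" K3 "1/2 + h", OF Dq' _ xp]
    note S2m = taylor2[of "\<lambda>m. (deriv ^^ Suc m) e" K3 "1/2 - h", OF Dq' _ xm]
    define e3 where "e3 = (deriv ^^ 3) e (1/2)"
    have ab: "\<bar>1/2 + h - 1/2\<bar> = h" "\<bar>1/2 - h - 1/2\<bar> = h" "1/2 + h - 1/2 = h" "1/2 - h - 1/2 = -h"
      using h by auto
    have T4p': "\<bar>e (1/2 + h) - (mu + e1 * h + e2 / 2 * h^2 + e3 / 6 * h^3)\<bar> \<le> K4 / 24 * h^4"
      using T4p unfolding ab e1_def e2_def e3_def by (simp add: half abs_of_pos[OF h(1)])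
    have T4m': "\<bar>e (1/2 - h) - (mu - e1 * h + e2 / 2 * h^2 - e3 / 6 * h^3)\<bar> \<le> K4 / 24 * h^4"
      using T4m unfolding ab e1_def e2_def e3_def by (simp add: half abs_of_pos[OF h(1)])
    have T3p': "\<bar>e (1/2 + h) - (mu + e1 * h + e2 / 2 * h^2)\<bar> \<le> K3 / 6 * h^3"
      using T3p unfolding ab e1_def e2_def by (simp add: half abs_of_pos[OF h(1)])
    have T3m': "\<bar>e (1/2 - h) - (mu - e1 * h + e2 / 2 * h^2)\<bar> \<le> K3 / 6 * h^3"
      using T3m unfolding ab e1_def e2_def by (simp add: half abs_of_pos[OF h(1)])
    have S3p': "\<bar>deriv e (1/2 + h) - (e1 + e2 * h + e3 / 2 * h^2)\<bar> \<le> K4 / 6 * h^3"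
      using S3p K4' unfolding ab e1_def e2_def e3_def by (simp add: numeral_eq_Suc abs_of_pos[OF h(1)])
    have S3m': "\<bar>deriv e (1/2 - h) - (e1 - e2 * h + e3 / 2 * h^2)\<bar> \<le> K4 / 6 * h^3"
      using S3m K4' unfolding ab e1_def e2_def e3_def by (simp add: numeral_eq_Suc abs_of_pos[OF h(1)])
    have S2p': "\<bar>deriv e (1/2 + h) - (e1 + e2 * h)\<bar> \<le> K3 / 2 * h^2"
      using S2p K3' unfolding ab e1_def e2_def by (simp add: numeral_eq_Suc abs_of_pos[OF h(1)])
    have S2m': "\<bar>deriv e (1/2 - h) - (e1 - e2 * h)\<bar> \<le> K3 / 2 * h^2"
      using S2m K3' unfolding ab e1_def e2_def by (simp add: numeral_eq_Suc abs_of_pos[OF h(1)])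
    define N where "N = e (1/2 + h) + e (1/2 - h) - 2 * mu"
    define D where "D = e (1/2 + h) - e (1/2 - h)"
    define N1 where "N1 = deriv e (1/2 - h) - deriv e (1/2 + h)"
    define D1 where "D1 = - deriv e (1/2 + h) - deriv e (1/2 - h)"
    have bN: "\<bar>N - e2 * h^2\<bar> \<le> A * h^4" using T4p' T4m' unfolding N_def A_def abs_le_iff by auto
    have bD: "\<bar>D - 2 * e1 * h\<bar> \<le> B * h^3" using T3p' T3m' unfolding D_def B_def abs_le_iff by auto
    have bN1: "\<bar>N1 + 2 * e2 * h\<bar> \<le> C * h^3" using S3p' S3m' unfolding N1_def C_def abs_le_iff by auto
    have bD1: "\<bar>D1 + 2 * e1\<bar> \<le> F * h^2" using S2p' S2m' unfolding D1_def F_def abs_le_iff by auto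
    have small: "B * h^2 \<le> e1"
    proof -
      have "h \<le> e1 / (B + 1)" using h unfolding \<delta>_def by simp
      then have "h * (B + 1) \<le> e1" using Bn by (simp add: field_simps)
      moreover have "B * h^2 \<le> B * h" using Bn h h4 by (intro mult_left_mono) (auto simp: power2_eq_square)
      moreover have "B * h \<le> h * (B + 1)" using h by (simp add: algebra_simps)
      ultimately show ?thesis by linarith
    qed
    have Sdeq: "Sd (1/2 - h) = 2 / (2*h)^2 * (N / D) + 1 / (2*h) * ((N1 * D - N * D1) / D^2)"
    proof -
      have r: "1 - (1/2 - h) = 1/2 + h" "1 - 2 * (1/2 - h) = 2 * h" by simp_all
      show ?thesis unfolding Sd_def r N_def D_def N1_def D1_def by simp
    qed
    show ?thesis unfolding Sdeq Q_def
      by (rule alg_bound[OF h(1) _ e1p bN bD bN1 bD1 small]) (use h4 in simp)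
  qed
  have ev: "eventually (\<lambda>\<alpha>. \<alpha> \<in> {1/2 - \<delta><..<1/2}) (at_left (1/2::real))"
    by (rule eventually_at_left_real) (use dpos in simp)
  have ev2: "eventually (\<lambda>\<alpha>. norm (deriv S \<alpha>) \<le> Q * (1/2 - \<alpha>)) (at_left (1/2::real))"
    using ev
  proof eventually_elim
    case (elim \<alpha>)
    have d4: "\<delta> \<le> 1/4" unfolding \<delta>_def by (rule min.cobounded1)
    have a: "0 < \<alpha>" "\<alpha> < 1/2" using elim d4 by auto
    have "deriv S \<alpha> = Sd \<alpha>" by (rule DERIV_imp_deriv[OF Sder[OF a]])
    moreover have "\<bar>Sd (1/2 - (1/2 - \<alpha>))\<bar> \<le> Q * (1/2 - \<alpha>)" using elim by (intro bound) auto
    ultimately show ?case by simp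
  qed
  have lim: "((\<lambda>\<alpha>. Q * (1/2 - \<alpha>)) \<longlongrightarrow> Q * (1/2 - 1/2)) (at_left (1/2::real))"
    by (intro tendsto_intros)
  have "(deriv S \<longlongrightarrow> 0) (at_left (1/2))"
    by (rule Lim_null_comparison[OF ev2]) (use lim in simp)
  with part1 show ?thesis by simp
qed


theorem mainTheorem4:
  fixes M :: "'a measure" and X :: "'a \<Rightarrow> real"
  assumes "prob_space M"
    and "X \<in> borel_measurable M"
    and "integrable M X"
    and nondeg: "\<not> (\<exists>c. AE \<omega> in M. X \<omega> = c)"
    and cdf_cont: "continuous_on UNIV (\<lambda>x. measure M {\<omega> \<in> space M. X \<omega> \<le> x})"
    and diff: "\<forall>k<4. \<forall>a\<in>{0<..<1}. ((deriv ^^ k) (expectile M X)) differentiable (at a)"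
    and cont4: "continuous_on {0<..<1} ((deriv ^^ 4) (expectile M X))"
  shows "(\<forall>a\<in>{0<..<1/2}. expectile_skew2 M X differentiable (at a))
         \<and> (deriv (expectile_skew2 M X) \<longlongrightarrow> 0) (at_left (1/2))"
proof -
  note P = assms(1,3)
  have d0: "expectile M X differentiable (at (1/2))" using diff by (auto dest: spec[of _ 0])
  have e1: "deriv (expectile M X) (1/2) > 0"
    using expectile_deriv_half[OF P d0] Bm_mu_pos[OF P nondeg] by simp
  have mono: "expectile M X a < expectile M X (1 - a)" if "0 < a" "a < 1/2" for a
    using expectile_below[OF P nondeg that] expectile_above[OF P, of "1 - a"] that by simp
  have S: "expectile_skew2 M X = (\<lambda>\<alpha>. (1 / (1 - 2 * \<alpha>)) * ((expectile M X (1 - \<alpha>) + expectile M X \<alpha> - 2 * (\<integral>\<omega>. X \<omega> \<partial>M))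
      / (expectile M X (1 - \<alpha>) - expectile M X \<alpha>)))"
    by (rule ext) (simp add: expectile_skew2_def)
  show ?thesis
    by (rule main_analytic[OF diff cont4 expectile_half[OF P] e1 mono S])
qed

end
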